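(* Let $(S,|\cdot|)$ be a finite metric space with $n$ points, $t\ge1$, $G'=(S,E')$ a $t$-spanner for $S$, $f$ an integer with $1\le f\le (n-1)/2$, and $G=(S,E)$ the graph obtained from $G'$ by the construction in the context. Let $F\subseteq E$ be such that $(S,F)$ has maximum degree at most $f$. Then for every edge $\{a,b\}\in E'$ there exists a shortest path between $a$ and $b$ in the graph $G\setminus F$ all of whose vertices belong to $C_{ab}\cup\{a,b\}$.
   Context: All graphs on $S$ have edge weights $|pq|$; path lengths are sums of edge weights. A graph $G'=(S,E')$ is a $t$-spanner for $S$ if its shortest-path distance satisfies $\delta_{G'}(p,q)\le t|pq|$ for all $p,q$. $G\setminus F$ is the graph with vertex set $S$ and edge set $E\setminus F$. Construction: for each edge $\{a,b\}\in E'$, list the points of $S\setminus\{a,b\}$ as $c_1,\dots,c_{n-2}$ in non-decreasing order of $|ac_i|+|c_ib|$ (ties broken arbitrarily) and let $C_{ab}=\{c_1,\dots,c_{2f-1}\}$. The graph $G=(S,E)$ has edge set $E=E'\cup\{\{a,c\},\{c,b\}:\{a,b\}\in E',\ c\in C_{ab}\}$. *)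

theory Defs
  imports Complex_Main
begin

definition metric_on :: "'a set \<Rightarrow> ('a \<Rightarrow> 'a \<Rightarrow> real) \<Rightarrow> bool" where
  "metric_on S d \<longleftrightarrow>
     (\<forall>x\<in>S. \<forall>y\<in>S. d x y \<ge> 0 \<and> (d x y = 0 \<longleftrightarrow> x = y) \<and> d x y = d y x) \<and>
     (\<forall>x\<in>S. \<forall>y\<in>S. \<forall>z\<in>S. d x z \<le> d x y + d y z)"

definition edges_on :: "'a set \<Rightarrow> 'a set set \<Rightarrow> bool" where
  "edges_on S E \<longleftrightarrow> E \<subseteq> {{p, q} | p q. p \<in> S \<and> q \<in> S \<and> p \<noteq> q}"

definition is_path :: "'a set \<Rightarrow> 'a set set \<Rightarrow> 'a \<Rightarrow> 'a \<Rightarrow> 'a list \<Rightarrow> bool" where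
  "is_path S E a b P \<longleftrightarrow> P \<noteq> [] \<and> hd P = a \<and> last P = b \<and> distinct P \<and> set P \<subseteq> S \<and>
     (\<forall>i. Suc i < length P \<longrightarrow> {P ! i, P ! Suc i} \<in> E)"

definition path_len :: "('a \<Rightarrow> 'a \<Rightarrow> real) \<Rightarrow> 'a list \<Rightarrow> real" where
  "path_len d P = (\<Sum>i<length P - 1. d (P ! i) (P ! Suc i))"

definition shortest_path :: "'a set \<Rightarrow> ('a \<Rightarrow> 'a \<Rightarrow> real) \<Rightarrow> 'a set set \<Rightarrow> 'a \<Rightarrow> 'a \<Rightarrow> 'a list \<Rightarrow> bool" where
  "shortest_path S d E a b P \<longleftrightarrow> is_path S E a b P \<and>
     (\<forall>Q. is_path S E a b Q \<longrightarrow> path_len d P \<le> path_len d Q)"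

definition graph_dist :: "'a set \<Rightarrow> ('a \<Rightarrow> 'a \<Rightarrow> real) \<Rightarrow> 'a set set \<Rightarrow> 'a \<Rightarrow> 'a \<Rightarrow> real" where
  "graph_dist S d E p q = Inf (path_len d ` {P. is_path S E p q P})"

definition is_spanner :: "'a set \<Rightarrow> ('a \<Rightarrow> 'a \<Rightarrow> real) \<Rightarrow> real \<Rightarrow> 'a set set \<Rightarrow> bool" where
  "is_spanner S d t E \<longleftrightarrow> edges_on S E \<and>
     (\<forall>p\<in>S. \<forall>q\<in>S. (\<exists>P. is_path S E p q P) \<and> graph_dist S d E p q \<le> t * d p q)"

text \<open>C is a valid choice of the sets C_ab: for each edge {a,b} of E', C{a,b} consists of the
  first 2f-1 points of S - {a,b} in non-decreasing order of |ac|+|cb|, ties broken arbitrarily.\<close>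
definition valid_C :: "'a set \<Rightarrow> ('a \<Rightarrow> 'a \<Rightarrow> real) \<Rightarrow> nat \<Rightarrow> 'a set set \<Rightarrow> ('a set \<Rightarrow> 'a set) \<Rightarrow> bool" where
  "valid_C S d f E' C \<longleftrightarrow> (\<forall>a b. {a, b} \<in> E' \<longrightarrow>
      C {a, b} \<subseteq> S - {a, b} \<and> card (C {a, b}) = 2 * f - 1 \<and>
      (\<forall>c\<in>C {a, b}. \<forall>c'\<in>S - {a, b} - C {a, b}. d a c + d c b \<le> d a c' + d c' b))"

definition constr_edges :: "'a set set \<Rightarrow> ('a set \<Rightarrow> 'a set) \<Rightarrow> 'a set set" where
  "constr_edges E' C = E' \<union> {{a, c} | a b c. {a, b} \<in> E' \<and> c \<in> C {a, b}}
                          \<union> {{c, b} | a b c. {a, b} \<in> E' \<and> c \<in> C {a, b}}"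

definition max_degree_le :: "'a set \<Rightarrow> 'a set set \<Rightarrow> nat \<Rightarrow> bool" where
  "max_degree_le S F f \<longleftrightarrow> (\<forall>v\<in>S. card {e \<in> F. v \<in> e} \<le> f)"

end

theory Submission imports Defs begin
fun plen :: "('a \<Rightarrow> 'a \<Rightarrow> real) \<Rightarrow> 'a list \<Rightarrow> real" where
  "plen d (x # y # xs) = d x y + plen d (y # xs)"
| "plen d _ = 0"

lemma path_len_plen: "path_len d P = plen d P"
proof (induction d P rule: plen.induct)
  case (1 d x y xs)
  have "path_len d (x # y # xs) = (\<Sum>i<Suc (length xs). d ((x # y # xs) ! i) ((x # y # xs) ! Suc i))"
    by (simp add: path_len_def)
  also have "\<dots> = d x y + (\<Sum>i<length xs. d ((y # xs) ! i) ((y # xs) ! Suc i))"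
    by (subst sum.lessThan_Suc_shift) simp
  also have "\<dots> = d x y + path_len d (y # xs)" by (simp add: path_len_def)
  finally show ?case using 1 by simp
qed (auto simp: path_len_def)

lemma plen_append: "plen d (xs @ x # ys) = plen d (xs @ [x]) + plen d (x # ys)"
proof (induction xs)
  case (Cons u xs) then show ?case by (cases xs) auto
qed simp

lemma plen_tri:
  assumes "metric_on S d" "set P \<subseteq> S" "P \<noteq> []"
  shows "d (hd P) (last P) \<le> plen d P"
  using assms(2,3)
proof (induction P)
  case (Cons x P)
  show ?case
  proof (cases P)
    case Nil
    have "x \<in> S" using Cons.prems by simp
    hence "d x x = 0" using assms(1) unfolding metric_on_def by simp
    then show ?thesis using Nil by simp
  next
    case (Cons y xs)
    note Cons2 = this
    hence IH: "d y (last (y # xs)) \<le> plen d (y # xs)" using Cons.IH Cons.prems by auto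
    have "last (y#xs) \<in> set (y#xs)" by (rule last_in_set) simp
    hence "last (y#xs) \<in> S" using Cons.prems Cons2 by auto
    moreover have "x \<in> S" "y \<in> S" using Cons.prems Cons2 by auto
    ultimately have "d x (last (y#xs)) \<le> d x y + d y (last (y#xs))"
      using assms(1) unfolding metric_on_def by (meson)
    then show ?thesis using IH Cons2 by simp
  qed
qed simp
lemma path_tri:
  assumes "metric_on S d" "is_path S G a b Q" "x \<in> set Q"
  shows "d a x + d x b \<le> path_len d Q"
proof -
  obtain Q1 Q2 where Q: "Q = Q1 @ x # Q2" using split_list[OF assms(3)] by blast
  have s: "set Q \<subseteq> S" "hd Q = a" "last Q = b" using assms(2) unfolding is_path_def by blast+
  have s1: "set (Q1 @ [x]) \<subseteq> S" "set (x # Q2) \<subseteq> S" using s(1) Q by auto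
  have 1: "d (hd (Q1 @ [x])) (last (Q1 @ [x])) \<le> plen d (Q1 @ [x])"
    by (rule plen_tri[OF assms(1) s1(1)]) simp
  have 2: "d (hd (x # Q2)) (last (x # Q2)) \<le> plen d (x # Q2)"
    by (rule plen_tri[OF assms(1) s1(2)]) simp
  have 3: "hd (Q1 @ [x]) = a" using s(2) Q by (cases Q1) auto
  have 4: "last (x # Q2) = b" using s(3) Q by (cases Q2) auto
  have "path_len d Q = plen d (Q1 @ [x]) + plen d (x # Q2)"
    unfolding path_len_plen Q by (rule plen_append)
  then show ?thesis using 1 2 3 4 by simp
qed

theorem lemma4:
  fixes S :: "'a set" and d :: "'a \<Rightarrow> 'a \<Rightarrow> real" and t :: real and f :: nat
    and E' F :: "'a set set" and C :: "'a set \<Rightarrow> 'a set"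
  assumes "finite S" and "metric_on S d"
    and "t \<ge> 1" and "is_spanner S d t E'"
    and "1 \<le> f" and "2 * f \<le> card S - 1"
    and "valid_C S d f E' C"
    and "F \<subseteq> constr_edges E' C" and "max_degree_le S F f"
  shows "\<forall>a b. {a, b} \<in> E' \<longrightarrow>
           (\<exists>P. shortest_path S d (constr_edges E' C - F) a b P \<and> set P \<subseteq> C {a, b} \<union> {a, b})"
proof (intro allI impI)
  fix a b assume ab: "{a, b} \<in> E'"
  let ?G = "constr_edges E' C - F"
  have Eon: "edges_on S E'" using assms(4) unfolding is_spanner_def by simp
  have inS: "\<And>x y. {x, y} \<in> E' \<Longrightarrow> x \<in> S \<and> y \<in> S \<and> x \<noteq> y"
  proof -
    fix x y assume "{x, y} \<in> E'"
    then obtain p q where "{x,y} = {p,q}" "p \<in> S" "q \<in> S" "p \<noteq> q"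
      using Eon unfolding edges_on_def by blast
    then show "x \<in> S \<and> y \<in> S \<and> x \<noteq> y" by (auto simp: doubleton_eq_iff)
  qed
  have aS: "a \<in> S" "b \<in> S" "a \<noteq> b" using inS[OF ab] by auto
  have VC: "\<And>x y. {x, y} \<in> E' \<Longrightarrow> C {x, y} \<subseteq> S - {x, y}"
    using assms(7) unfolding valid_C_def by blast
  have Csub: "C {a,b} \<subseteq> S - {a,b}" and Ccard: "card (C {a, b}) = 2 * f - 1"
    and Cmin: "\<forall>c\<in>C {a, b}. \<forall>c'\<in>S - {a, b} - C {a, b}. d a c + d c b \<le> d a c' + d c' b"
    using assms(7) ab unfolding valid_C_def by blast+
  have finC: "finite (C {a,b})" using Csub assms(1) finite_subset by blast
  have ce_pow: "constr_edges E' C \<subseteq> Pow S"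
  proof
    fix e assume "e \<in> constr_edges E' C"
    then show "e \<in> Pow S" unfolding constr_edges_def
    proof (elim UnE)
      assume "e \<in> E'" then show ?thesis using Eon unfolding edges_on_def by auto
    next
      assume "e \<in> {{a, c} |a b c. {a, b} \<in> E' \<and> c \<in> C {a, b}}"
      then obtain x y c where "e = {x,c}" "{x,y} \<in> E'" "c \<in> C {x,y}" by blast
      then show ?thesis using inS VC by blast
    next
      assume "e \<in> {{c, b} |a b c. {a, b} \<in> E' \<and> c \<in> C {a, b}}"
      then obtain x y c where "e = {c,y}" "{x,y} \<in> E'" "c \<in> C {x,y}" by blast
      then show ?thesis using inS VC by blast
    qed
  qed
  have "finite (Pow S)" using assms(1) by simp
  hence finF: "finite F" using finite_subset[OF subset_trans[OF assms(8) ce_pow]] by blast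
  have degA: "card {e \<in> F. a \<in> e} \<le> f" and degB: "card {e \<in> F. b \<in> e} \<le> f"
    using assms(9) aS unfolding max_degree_le_def by auto
  define A where "A = {P. is_path S ?G a b P}"
  have finA: "finite A"
  proof (rule finite_subset)
    show "A \<subseteq> {xs. set xs \<subseteq> S \<and> length xs \<le> card S}"
    proof
      fix P assume "P \<in> A"
      hence "distinct P" "set P \<subseteq> S" unfolding A_def is_path_def by auto
      then show "P \<in> {xs. set xs \<subseteq> S \<and> length xs \<le> card S}"
        using distinct_card[of P] card_mono[OF assms(1), of "set P"] by simp
    qed
    show "finite {xs. set xs \<subseteq> S \<and> length xs \<le> card S}"
      by (rule finite_lists_length_le[OF assms(1)])
  qed
  have tri: "\<And>Q x. Q \<in> A \<Longrightarrow> x \<in> set Q \<Longrightarrow> d a x + d x b \<le> path_len d Q"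
    unfolding A_def using path_tri[OF assms(2)] by blast
  have d0: "\<And>x. x \<in> S \<Longrightarrow> d x x = 0" using assms(2) unfolding metric_on_def by auto
  show "\<exists>P. shortest_path S d ?G a b P \<and> set P \<subseteq> C {a, b} \<union> {a, b}"
  proof (cases "{a,b} \<in> F")
    case False
    have "{a,b} \<in> constr_edges E' C" using ab unfolding constr_edges_def by blast
    hence e: "{a,b} \<in> ?G" using False by blast
    have pab: "is_path S ?G a b [a,b]"
      unfolding is_path_def using aS e by (auto simp: less_Suc_eq)
    have "path_len d [a,b] = d a b" by (simp add: path_len_plen)
    moreover have "\<And>Q. Q \<in> A \<Longrightarrow> d a b \<le> path_len d Q"
    proof -
      fix Q assume Q: "Q \<in> A"
      hence "Q \<noteq> []" "hd Q = a" unfolding A_def is_path_def by blast+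
      hence "a \<in> set Q" using hd_in_set by metis
      hence "d a a + d a b \<le> path_len d Q" using tri Q by blast
      then show "d a b \<le> path_len d Q" using d0 aS by simp
    qed
    ultimately show ?thesis using pab unfolding shortest_path_def A_def by auto
  next
    case True
    define Da where "Da = {c \<in> C {a,b}. {a,c} \<in> F}"
    define Db where "Db = {c \<in> C {a,b}. {c,b} \<in> F}"
    have cDa: "card Da + 1 \<le> f"
    proof -
      have "b \<notin> Da" using Csub unfolding Da_def by auto
      hence "card (insert b Da) = card Da + 1" using finC Da_def by auto
      have inj: "inj_on (\<lambda>c. {a,c}) (insert b Da)"
        by (rule inj_onI) (auto simp: doubleton_eq_iff)
      have sub: "(\<lambda>c. {a,c}) ` (insert b Da) \<subseteq> {e \<in> F. a \<in> e}"
        using True Da_def by auto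
      have fin: "finite {e \<in> F. a \<in> e}" using finF by auto
      have "card ((\<lambda>c. {a,c}) ` (insert b Da)) = card (insert b Da)" by (rule card_image[OF inj])
      moreover have "card ((\<lambda>c. {a,c}) ` (insert b Da)) \<le> card {e \<in> F. a \<in> e}"
        by (rule card_mono[OF fin sub])
      ultimately show ?thesis using degA \<open>card (insert b Da) = card Da + 1\<close> by linarith
    qed
    have cDb: "card Db + 1 \<le> f"
    proof -
      have "a \<notin> Db" using Csub unfolding Db_def by auto
      hence "card (insert a Db) = card Db + 1" using finC Db_def by auto
      have inj: "inj_on (\<lambda>c. {c,b}) (insert a Db)"
        by (rule inj_onI) (auto simp: doubleton_eq_iff)
      have sub: "(\<lambda>c. {c,b}) ` (insert a Db) \<subseteq> {e \<in> F. b \<in> e}"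
        using True Db_def by (auto simp: insert_commute)
      have fin: "finite {e \<in> F. b \<in> e}" using finF by auto
      have "card ((\<lambda>c. {c,b}) ` (insert a Db)) = card (insert a Db)" by (rule card_image[OF inj])
      moreover have "card ((\<lambda>c. {c,b}) ` (insert a Db)) \<le> card {e \<in> F. b \<in> e}"
        by (rule card_mono[OF fin sub])
      ultimately show ?thesis using degB \<open>card (insert a Db) = card Db + 1\<close> by linarith
    qed
    have "card (Da \<union> Db) \<le> card Da + card Db" by (rule card_Un_le)
    hence "card (Da \<union> Db) < card (C {a,b})" using cDa cDb Ccard assms(5) by linarith
    moreover have "finite (Da \<union> Db)" using finC unfolding Da_def Db_def by simp
    ultimately have "\<not> C {a,b} \<subseteq> Da \<union> Db"
      using card_mono[of "Da \<union> Db" "C {a,b}"] by linarith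
    then obtain c where c: "c \<in> C {a,b}" "{a,c} \<notin> F" "{c,b} \<notin> F"
      unfolding Da_def Db_def by blast
    have cS: "c \<in> S" "c \<noteq> a" "c \<noteq> b" using c Csub by auto
    have "{a,c} \<in> constr_edges E' C" using ab c(1) unfolding constr_edges_def by blast
    hence e1: "{a,c} \<in> ?G" using c by blast
    have "{c,b} \<in> constr_edges E' C" using ab c(1) unfolding constr_edges_def by blast
    hence e2: "{c,b} \<in> ?G" using c by blast
    have pc: "is_path S ?G a b [a,c,b]"
      unfolding is_path_def using cS aS e1 e2 by (auto simp: less_Suc_eq)
    hence pcA: "[a,c,b] \<in> A" unfolding A_def by simp
    have lenc: "path_len d [a,c,b] = d a c + d c b" by (simp add: path_len_plen)
    have neA: "A \<noteq> {}" using pcA by blast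
    have "Min (path_len d ` A) \<in> path_len d ` A" using finA neA by simp
    then obtain P where P: "P \<in> A" "path_len d P = Min (path_len d ` A)" by auto
    have Pmin: "\<forall>Q\<in>A. path_len d P \<le> path_len d Q" using P finA by simp
    show ?thesis
    proof (cases "set P \<subseteq> C {a, b} \<union> {a, b}")
      case True
      then show ?thesis using P Pmin unfolding shortest_path_def A_def by auto
    next
      case False
      then obtain x where x: "x \<in> set P" "x \<notin> C {a,b}" "x \<noteq> a" "x \<noteq> b" by auto
      have "x \<in> S" using P x unfolding A_def is_path_def by auto
      hence "d a c + d c b \<le> d a x + d x b" using Cmin c x by blast
      also have "\<dots> \<le> path_len d P" using tri P x by blast
      finally have "\<forall>Q\<in>A. path_len d [a,c,b] \<le> path_len d Q" using Pmin lenc by fastforce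
      then show ?thesis using pc c unfolding shortest_path_def A_def by auto
    qed
  qed
qed

end
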